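(* Let $C$ be the positively oriented unit circle, $g=1$ on $\{\operatorname{Re}z>0\}\cap C$ and $g=-1$ on $\{\operatorname{Re}z<0\}\cap C$, $g_l=\frac{2}{l\pi}\sin\frac{l\pi}{2}$ ($l\ne0$), $g_0=0$, $\lambda\in\mathbb{C}\setminus[-1,1]$, $\phi=g+\lambda$, and $\vec{\mathfrak g}_1=(g_{-m},\dots,g_{-1})^T\in\mathbb{C}^m$. Let $Y_K$ be the unique solution of the Riemann–Hilbert problem: $Y_K\colon\mathbb{C}\setminus C\to\mathbb{C}^{2\times2}$ is analytic, $$Y_{K+}(z)=Y_{K-}(z)\begin{pmatrix}\phi(z)&-(\phi(z)-1)z^m\\(\phi(z)-1)z^{-m}&2-\phi(z)\end{pmatrix}\quad\text{for a.e. } z\in C$$ (in the $L^2$ sense, with $+$/$-$ denoting boundary values from the left/right of the positively oriented circle), and $Y_K(z)=I+O(z^{-1})$ as $z\to\infty$. Write $Y_K(z)=I+\sum_{\ell=1}^\infty M_\ell z^{-\ell}$ as $z\to\infty$. Then $$\big\langle T_m[\phi]^{-1}\vec{\mathfrak g}_1,\vec{\mathfrak g}_1\big\rangle=-\frac{2}{\pi}\sum_{\ell=1}^m\frac{\sin\frac{\ell\pi}{2}}{\ell}\,M_{\ell,11},$$ where $M_{\ell,11}$ is the $(1,1)$ entry of $M_\ell$.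
   Context: $T_m[\phi]=(\phi_{j-k})_{j,k=0}^{m-1}$ is the Toeplitz matrix of Fourier coefficients of $\phi$; $\langle\vec a,\vec b\rangle=\sum_j a_jb_j$. *)

theory Defs
  imports "HOL-Analysis.Analysis" "Jordan_Normal_Form.Gauss_Jordan_Elimination"
begin

definition fourier_coeff :: "(complex \<Rightarrow> complex) \<Rightarrow> int \<Rightarrow> complex" where
  "fourier_coeff f k = integral {0..2*pi} (\<lambda>t. f (cis t) * cis (- (of_int k * t))) / (2 * pi)"

definition toeplitz_mat :: "nat \<Rightarrow> (complex \<Rightarrow> complex) \<Rightarrow> complex mat" where
  "toeplitz_mat m f = mat m m (\<lambda>(j,k). fourier_coeff f (int j - int k))"

text \<open>The step function g on the unit circle (value at the two points with Re z = 0 is irrelevant).\<close>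
definition g_fun :: "complex \<Rightarrow> complex" where
  "g_fun z = (if Re z > 0 then 1 else if Re z < 0 then -1 else 0)"

definition g_coeff :: "int \<Rightarrow> complex" where
  "g_coeff l = (if l = 0 then 0 else of_real (2 / (real_of_int l * pi) * sin (real_of_int l * pi / 2)))"

definition g_vec1 :: "nat \<Rightarrow> complex vec" where
  "g_vec1 m = vec m (\<lambda>j. g_coeff (int j - int m))"

definition entry :: "complex^2^2 \<Rightarrow> 2 \<Rightarrow> 2 \<Rightarrow> complex" where
  "entry A i j = Finite_Cartesian_Product.vec_nth (Finite_Cartesian_Product.vec_nth A i) j"

definition jump_mat :: "nat \<Rightarrow> (complex \<Rightarrow> complex) \<Rightarrow> complex \<Rightarrow> complex^2^2" where
  "jump_mat m \<phi> z = vector [vector [\<phi> z, - (\<phi> z - 1) * z ^ m],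
                             vector [(\<phi> z - 1) * inverse z ^ m, 2 - \<phi> z]]"

text \<open>Yb is the L2 boundary value of Y on the unit circle, approached along radii r \<rightarrow> 1 in the
  filter F (at_left 1: from inside = + side; at_right 1: from outside = - side).\<close>
definition L2_boundary_value ::
  "(complex \<Rightarrow> complex^2^2) \<Rightarrow> (complex \<Rightarrow> complex^2^2) \<Rightarrow> real filter \<Rightarrow> bool" where
  "L2_boundary_value Y Yb F \<longleftrightarrow>
     (\<forall>\<^sub>F r in F. (\<lambda>t. (norm (Y (of_real r * cis t) - Yb (cis t)))\<^sup>2) integrable_on {0..2*pi}) \<and>
     ((\<lambda>r. integral {0..2*pi} (\<lambda>t. (norm (Y (of_real r * cis t) - Yb (cis t)))\<^sup>2)) \<longlongrightarrow> 0) F"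

definition RHP_YK :: "nat \<Rightarrow> (complex \<Rightarrow> complex) \<Rightarrow> (complex \<Rightarrow> complex^2^2) \<Rightarrow> bool" where
  "RHP_YK m \<phi> Y \<longleftrightarrow>
     (\<forall>i j. (\<lambda>z. entry (Y z) i j) holomorphic_on (- sphere 0 1)) \<and>
     (\<exists>Yp Ym. L2_boundary_value Y Yp (at_left 1) \<and> L2_boundary_value Y Ym (at_right 1) \<and>
        (AE t in lebesgue_on {0..2*pi}. Yp (cis t) = Ym (cis t) ** jump_mat m \<phi> (cis t))) \<and>
     (\<exists>c R. \<forall>z. norm z \<ge> R \<longrightarrow> norm (Y z - Finite_Cartesian_Product.mat 1) \<le> c / norm z)"

end

theory Submission
  imports Defs "HOL-Complex_Analysis.Complex_Analysis" "Jordan_Normal_Form.Determinant"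
begin


lemma exp_has_integral:
  fixes c :: complex and a b :: real
  assumes "c \<noteq> 0" "a \<le> b"
  shows "((\<lambda>t. exp (c * of_real t)) has_integral ((exp (c * of_real b) - exp (c * of_real a)) / c)) {a..b}"
proof -
  have "((\<lambda>t. exp (c * of_real t) / c) has_vector_derivative exp (c * of_real x)) (at x within {a..b})" for x
  proof -
    have "((\<lambda>z. exp (c * z) / c) has_field_derivative (exp (c * of_real x) * (c * 1)) / c) (at (of_real x))"
      by (auto intro!: derivative_eq_intros)
    then have "((\<lambda>z. exp (c * z) / c) has_field_derivative exp (c * of_real x)) (at (of_real x))"
      using assms by simp
    from has_vector_derivative_real_field[OF this] show ?thesis by simp
  qed
  from fundamental_theorem_of_calculus[OF assms(2) this]
  show ?thesis by (simp add: diff_divide_distrib)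
qed

lemma cis_int_has_integral:
  fixes j :: int
  shows "((\<lambda>t. cis (of_int j * t)) has_integral (if j = 0 then 2 * pi else 0)) {0..2*pi}"
proof (cases "j = 0")
  case True
  then show ?thesis using has_integral_const_real[of "1::complex" 0 "2*pi"] by (simp add: scaleR_conv_of_real)
next
  case False
  have c: "\<i> * of_int j \<noteq> (0::complex)" using False by simp
  have e: "cis (of_int j * t) = exp ((\<i> * of_int j) * of_real t)" for t
    by (simp add: cis_conv_exp mult_ac)
  have "exp ((\<i> * of_int j) * of_real (2*pi)) = 1"
    using cis_multiple_2pi[of "of_int j"] by (simp add: cis_conv_exp[symmetric] mult_ac)
  with exp_has_integral[OF c, of 0 "2*pi"] False show ?thesis
    by (simp add: e)
qed



lemma series_has_integral:
  fixes a :: "nat \<Rightarrow> complex" and f :: "nat \<Rightarrow> int" and n :: int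
  assumes sa: "summable (\<lambda>l. norm (a l))"
  shows "((\<lambda>t. (\<Sum>l. a l * cis (of_int (f l) * t)) * cis (- (of_int n * t))) has_integral
           (2 * pi * (\<Sum>l. if f l = n then a l else 0))) {0..2*pi}"
proof -
  define h where "h l t = a l * cis (of_int (f l - n) * t)" for l t
  have hb: "norm (h l t) \<le> norm (a l)" for l t by (simp add: h_def norm_mult)
  have ul: "uniform_limit {0..2*pi} (\<lambda>N t. \<Sum>l<N. h l t) (\<lambda>t. \<Sum>l. h l t) sequentially"
    by (rule Weierstrass_m_test[OF _ sa]) (use hb in auto)
  have cont: "continuous_on {0..2*pi} (\<lambda>t. \<Sum>l<N. h l t)" for N
    unfolding h_def by (intro continuous_intros)
  obtain I J where I: "\<And>N. ((\<lambda>t. \<Sum>l<N. h l t) has_integral I N) {0..2*pi}"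
    and J: "((\<lambda>t. \<Sum>l. h l t) has_integral J) {0..2*pi}" and IJ: "I \<longlonglongrightarrow> J"
    using uniform_limit_integral[OF ul cont] by auto
  have hint: "(h l has_integral (2 * pi * (if f l = n then a l else 0))) {0..2*pi}" for l
  proof -
    have "((\<lambda>t. a l * cis (of_int (f l - n) * t)) has_integral a l * (if f l - n = 0 then 2 * pi else 0)) {0..2*pi}"
      by (rule has_integral_mult_right[OF cis_int_has_integral])
    then show ?thesis unfolding h_def by (cases "f l = n") (auto simp: mult_ac)
  qed
  have "I N = (\<Sum>l<N. 2 * pi * (if f l = n then a l else 0))" for N
    using has_integral_unique[OF I has_integral_sum[OF _ hint]] by auto
  moreover have "summable (\<lambda>l. if f l = n then a l else 0)"
    by (rule summable_norm_cancel, rule summable_comparison_test[OF _ sa]) auto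
  ultimately have "I \<longlonglongrightarrow> 2 * pi * (\<Sum>l. if f l = n then a l else 0)"
  proof -
    assume e: "\<And>N. I N = (\<Sum>l<N. 2 * pi * (if f l = n then a l else 0))" and s: "summable (\<lambda>l. if f l = n then a l else 0)"
    have "I = (\<lambda>N. 2 * pi * (\<Sum>l<N. (if f l = n then a l else 0)))"
      using e by (simp add: sum_distrib_left fun_eq_iff)
    then show ?thesis using tendsto_mult_left[OF summable_LIMSEQ[OF s]] by simp
  qed
  with IJ have "J = 2 * pi * (\<Sum>l. if f l = n then a l else 0)" using LIMSEQ_unique by blast
  moreover have "(\<Sum>l. h l t) = (\<Sum>l. a l * cis (of_int (f l) * t)) * cis (- (of_int n * t))" for t
  proof -
    have "summable (\<lambda>l. a l * cis (of_int (f l) * t))"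
      by (rule summable_norm_cancel, rule summable_comparison_test[OF _ sa]) (auto simp: norm_mult)
    then have "(\<Sum>l. a l * cis (of_int (f l) * t)) * cis (- (of_int n * t)) = (\<Sum>l. a l * cis (of_int (f l) * t) * cis (- (of_int n * t)))"
      by (rule suminf_mult2)
    also have "\<dots> = (\<Sum>l. h l t)"
      by (simp add: h_def cis_mult algebra_simps)
    finally show ?thesis by simp
  qed
  ultimately show ?thesis using J by simp
qed



lemma ps_interior_has_integral:
  fixes c :: "nat \<Rightarrow> complex" and F :: "complex \<Rightarrow> complex" and n :: int and \<rho> :: real
  assumes F: "\<And>w. norm w < 1 \<Longrightarrow> (\<lambda>l. c l * w ^ l) sums F w"
    and \<rho>: "0 \<le> \<rho>" "\<rho> < 1"
  shows "((\<lambda>t. F (of_real \<rho> * cis t) * cis (- (of_int n * t))) has_integral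
           (2 * pi * (if n \<ge> 0 then c (nat n) * of_real \<rho> ^ nat n else 0))) {0..2*pi}"
proof -
  define a where "a l = c l * of_real \<rho> ^ l" for l
  define w0 :: complex where "w0 = of_real ((1 + \<rho>) / 2)"
  have nw: "norm w0 = (1 + \<rho>) / 2" unfolding w0_def norm_of_real using \<rho> by auto
  have "norm w0 < 1" "norm (of_real \<rho> :: complex) < norm w0" using \<rho> by (auto simp: nw)
  from powser_insidea[OF sums_summable[OF F[OF this(1)]] this(2)]
  have sa: "summable (\<lambda>l. norm (a l))" by (simp add: a_def)
  have Fe: "F (of_real \<rho> * cis t) = (\<Sum>l. a l * cis (of_int (int l) * t))" for t
  proof -
    have n1: "norm (of_real \<rho> * cis t) < 1" using \<rho> by (simp add: norm_mult)
    have e: "c l * (of_real \<rho> * cis t) ^ l = a l * cis (of_int (int l) * t)" for l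
      by (simp add: a_def power_mult_distrib Complex.DeMoivre)
    from sums_unique[OF F[OF n1]] show ?thesis
      by (simp only: e)
  qed
  have "(\<Sum>l. if int l = n then a l else 0) = (if n \<ge> 0 then a (nat n) else 0)"
  proof (cases "n \<ge> 0")
    case True
    then have "(\<lambda>l. if int l = n then a l else 0) = (\<lambda>l. if l = nat n then a l else 0)" by (auto simp: fun_eq_iff)
    then show ?thesis using sums_unique[OF sums_single[of "nat n" a]] True by simp
  next
    case False
    then show ?thesis by simp
  qed
  with series_has_integral[OF sa, of int n] show ?thesis
    unfolding Fe by (auto simp: a_def)
qed

lemma ps_exterior_has_integral:
  fixes b :: "nat \<Rightarrow> complex" and G :: "complex \<Rightarrow> complex" and n :: int and s :: real
  assumes G: "\<And>z. norm z > 1 \<Longrightarrow> (\<lambda>l. b (Suc l) / z ^ Suc l) sums G z"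
    and s: "s > 1"
  shows "((\<lambda>t. G (of_real s * cis t) * cis (- (of_int n * t))) has_integral
           (2 * pi * (if n < 0 then b (nat (- n)) / of_real s ^ nat (- n) else 0))) {0..2*pi}"
proof -
  define a where "a l = b (Suc l) / of_real s ^ Suc l" for l
  define s' :: real where "s' = (1 + s) / 2"
  have s': "s' > 1" "s' < s" using s by (auto simp: s'_def)
  have "(\<lambda>l. b (Suc l) / (of_real s') ^ Suc l) sums G (of_real s')" using G[of "of_real s'"] s' by simp
  then have "summable (\<lambda>l. (b (Suc l) / of_real s') * (1 / of_real s') ^ l)"
    by (rule sums_summable[THEN summable_cong[THEN iffD1, rotated]]) (simp add: field_simps)
  moreover have "norm (1 / of_real s :: complex) < norm (1 / of_real s' :: complex)"
    using s' s by (simp add: norm_divide frac_less2)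
  ultimately have "summable (\<lambda>l. norm ((b (Suc l) / of_real s') * (1 / of_real s) ^ l))"
    by (rule powser_insidea)
  then have "summable (\<lambda>l. (s' / s) * norm ((b (Suc l) / of_real s') * (1 / of_real s) ^ l))"
    by (rule summable_mult)
  moreover have "(s' / s) * norm ((b (Suc l) / of_real s') * (1 / of_real s) ^ l) = norm (a l)" for l
    using s s' by (simp add: a_def norm_divide norm_power norm_mult field_simps)
  ultimately have sa: "summable (\<lambda>l. norm (a l))" by (simp only:)
  have Ge: "G (of_real s * cis t) = (\<Sum>l. a l * cis (of_int (- (int l + 1)) * t))" for t
  proof -
    have n1: "norm (of_real s * cis t) > 1" using s by (simp add: norm_mult)
    have e: "b (Suc l) / (of_real s * cis t) ^ Suc l = a l * cis (of_int (- (int l + 1)) * t)" for l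
    proof -
      have p: "(of_real s * cis t) ^ Suc l = of_real s ^ Suc l * cis (real (Suc l) * t)"
        by (simp only: power_mult_distrib Complex.DeMoivre)
      have q: "1 / cis (real (Suc l) * t) = cis (of_int (- (int l + 1)) * t)"
        using cis_divide[of 0 "real (Suc l) * t"] by (simp add: algebra_simps)
      show ?thesis unfolding p a_def q[symmetric]
        by (simp add: field_simps)
    qed
    from sums_unique[OF G[OF n1]] show ?thesis
      by (simp only: e)
  qed
  have "(\<Sum>l. if - (int l + 1) = n then a l else 0) = (if n < 0 then a (nat (- n) - 1) else 0)"
  proof (cases "n < 0")
    case True
    then have "(\<lambda>l. if - (int l + 1) = n then a l else 0) = (\<lambda>l. if l = nat (- n) - 1 then a l else 0)"
      by (auto simp: fun_eq_iff)
    then show ?thesis using sums_unique[OF sums_single[of "nat (- n) - 1" a]] True by simp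
  next
    case False
    then show ?thesis by simp
  qed
  moreover have "n < 0 \<Longrightarrow> a (nat (- n) - 1) = b (nat (- n)) / of_real s ^ nat (- n)"
    by (simp add: a_def Suc_diff_1)
  ultimately show ?thesis using series_has_integral[OF sa, of "\<lambda>l. - (int l + 1)" n]
    unfolding Ge by (cases "n < 0") auto
qed



lemma g_fun_cis_pos: "t \<in> {0..2*pi} - {pi/2, 3*pi/2} \<Longrightarrow> t \<le> pi/2 \<or> t \<ge> 3*pi/2 \<Longrightarrow> g_fun (cis t) = 1"
proof -
  assume t: "t \<in> {0..2*pi} - {pi/2, 3*pi/2}" and o: "t \<le> pi/2 \<or> t \<ge> 3*pi/2"
  have "cos t > 0"
  proof (cases "t \<le> pi/2")
    case True
    then show ?thesis using t by (intro cos_gt_zero_pi) auto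
  next
    case False
    then have "cos (t - 2*pi) > 0" using t o by (intro cos_gt_zero_pi) auto
    then show ?thesis by (simp add: cos_diff)
  qed
  then show ?thesis by (simp add: g_fun_def)
qed

lemma g_fun_cis_neg: "t \<in> {pi/2..3*pi/2} - {pi/2, 3*pi/2} \<Longrightarrow> g_fun (cis t) = -1"
proof -
  assume t: "t \<in> {pi/2..3*pi/2} - {pi/2, 3*pi/2}"
  have "cos (t - pi) > 0" using t by (intro cos_gt_zero_pi) auto
  then have "cos t < 0" by (simp add: cos_diff)
  then show ?thesis by (simp add: g_fun_def)
qed

lemma g_fun_has_integral:
  fixes c :: "real \<Rightarrow> complex"
  assumes c1: "(c has_integral I1) {0..pi/2}" and c2: "(c has_integral I2) {pi/2..3*pi/2}"
    and c3: "(c has_integral I3) {3*pi/2..2*pi}"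
  shows "((\<lambda>t. g_fun (cis t) * c t) has_integral (I1 - I2 + I3)) {0..2*pi}"
proof -
  have fin: "finite {pi/2, 3*pi/2}" by simp
  have h1: "((\<lambda>t. g_fun (cis t) * c t) has_integral I1) {0..pi/2}"
    by (rule has_integral_spike_finite[OF fin _ c1]) (auto intro!: g_fun_cis_pos)
  have h2: "((\<lambda>t. g_fun (cis t) * c t) has_integral - I2) {pi/2..3*pi/2}"
    by (rule has_integral_spike_finite[OF fin _ has_integral_neg[OF c2]]) (auto simp: g_fun_cis_neg)
  have h3: "((\<lambda>t. g_fun (cis t) * c t) has_integral I3) {3*pi/2..2*pi}"
    by (rule has_integral_spike_finite[OF fin _ c3]) (auto intro!: g_fun_cis_pos)
  have "((\<lambda>t. g_fun (cis t) * c t) has_integral (I1 + - I2)) {0..3*pi/2}"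
    by (rule has_integral_combine[OF _ _ h1 h2]) auto
  from has_integral_combine[OF _ _ this h3] show ?thesis by simp
qed

lemma cis_exp_form: "cis (- (of_int k * t)) = exp ((- \<i> * of_int k) * of_real t)"
  by (simp add: cis_conv_exp mult.assoc)

lemma g_fun_fourier_has_integral:
  fixes k :: int
  shows "((\<lambda>t. g_fun (cis t) * cis (- (of_int k * t))) has_integral (2 * pi * g_coeff k)) {0..2*pi}"
proof (cases "k = 0")
  case True
  have "((\<lambda>t. g_fun (cis t) * 1) has_integral (of_real (pi/2) - of_real pi + of_real (pi/2))) {0..2*pi}"
  proof (rule g_fun_has_integral)
    show "((\<lambda>t. 1) has_integral complex_of_real (pi / 2)) {0..pi / 2}"
      using has_integral_const_real[of "1::complex" 0 "pi/2"] by (simp add: scaleR_conv_of_real)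
    show "((\<lambda>t. 1) has_integral complex_of_real pi) {pi / 2..3 * pi / 2}"
      using has_integral_const_real[of "1::complex" "pi/2" "3*pi/2"] by (simp add: scaleR_conv_of_real)
    show "((\<lambda>t. 1) has_integral complex_of_real (pi / 2)) {3 * pi / 2..2 * pi}"
      using has_integral_const_real[of "1::complex" "3*pi/2" "2*pi"] by (simp add: scaleR_conv_of_real)
  qed
  then show ?thesis using True by (simp add: g_coeff_def)
next
  case False
  define c where "c = - \<i> * of_int k"
  have c0: "c \<noteq> 0" using False by (simp add: c_def)
  define E where "E x = exp (c * of_real x)" for x
  have ints: "((\<lambda>t. cis (- (of_int k * t))) has_integral ((E b - E a) / c)) {a..b}" if "a \<le> b" for a b
    using exp_has_integral[OF c0 that] by (simp add: cis_exp_form c_def E_def)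
  have "((\<lambda>t. g_fun (cis t) * cis (- (of_int k * t))) has_integral
        ((E (pi/2) - E 0) / c - (E (3*pi/2) - E (pi/2)) / c + (E (2*pi) - E (3*pi/2)) / c)) {0..2*pi}"
    by (rule g_fun_has_integral; rule ints) auto
  moreover have "(E (pi/2) - E 0) / c - (E (3*pi/2) - E (pi/2)) / c + (E (2*pi) - E (3*pi/2)) / c
      = 2 * pi * g_coeff k"
  proof -
    define x where "x = of_int k * pi / 2"
    have Ecis: "E y = cis (- (of_int k * y))" for y by (simp add: E_def c_def cis_exp_form)
    have E0: "E 0 = 1" by (simp add: E_def)
    have E2: "E (2*pi) = 1"
    proof -
      have "E (2*pi) = cis (2 * pi * (- of_int k))" by (simp add: Ecis mult_ac)
      also have "\<dots> = 1" by (rule cis_multiple_2pi) simp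
      finally show ?thesis .
    qed
    have E1: "E (pi/2) = cis (- x)" by (simp add: E_def c_def x_def cis_conv_exp mult_ac)
    have E3: "E (3*pi/2) = cis x"
    proof -
      have "E (3*pi/2) = cis (- (3 * x))" by (simp add: E_def c_def x_def cis_conv_exp mult_ac)
      also have "- (3 * x) = x + 2 * pi * (- of_int k)" by (simp add: x_def algebra_simps)
      also have "cis \<dots> = cis x * cis (2 * pi * (- of_int k))" by (simp add: cis_mult)
      also have "\<dots> = cis x"
      proof -
        have "cis (2 * pi * (- of_int k)) = 1" by (rule cis_multiple_2pi) simp
        then show ?thesis by (simp only: mult_1_right)
      qed
      finally show ?thesis .
    qed
    have sx: "cis (- x) - cis x = - 2 * \<i> * of_real (sin x)"
      by (simp add: complex_eq_iff)
    have "(E (pi/2) - E 0) / c - (E (3*pi/2) - E (pi/2)) / c + (E (2*pi) - E (3*pi/2)) / c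
        = 2 * (cis (- x) - cis x) / c"
      unfolding E0 E1 E2 E3 using c0 by (simp add: field_simps)
    also have "\<dots> = 2 * (- 2 * \<i> * of_real (sin x)) / c" by (simp only: sx)
    also have "\<dots> = 2 * pi * g_coeff k"
      using False by (simp add: c_def g_coeff_def x_def field_simps)
    finally show ?thesis .
  qed
  ultimately show ?thesis by simp
qed



lemma has_integral_eqI:
  assumes "(f has_integral I) S" "\<And>x. x \<in> S \<Longrightarrow> f x = g x" "I = J"
  shows "(g has_integral J) S"
  using has_integral_eq[OF assms(2,1)] assms(3) by simp

lemma phi_has_integral:
  fixes k :: int
  shows "((\<lambda>t. (g_fun (cis t) + lam) * cis (- (of_int k * t))) has_integral
          (2 * pi * (g_coeff k + (if k = 0 then lam else 0)))) {0..2*pi}"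
proof -
  have "((\<lambda>t. g_fun (cis t) * cis (- (of_int k * t)) + lam * cis (of_int (- k) * t)) has_integral
          (2 * pi * g_coeff k + lam * (if - k = 0 then 2 * pi else 0))) {0..2*pi}"
    by (intro has_integral_add g_fun_fourier_has_integral has_integral_mult_right cis_int_has_integral)
  then show ?thesis by (rule has_integral_eqI) (auto simp: algebra_simps)
qed

lemma fourier_coeff_phi: "fourier_coeff (\<lambda>z. g_fun z + lam) k = g_coeff k + (if k = 0 then lam else 0)"
  unfolding fourier_coeff_def using integral_unique[OF phi_has_integral[of lam k]] by simp

lemma quad_expand:
  fixes v :: "nat \<Rightarrow> complex"
  shows "complex_of_real ((cmod (\<Sum>k<m. v k * cis (real k * t)))\<^sup>2) =
     (\<Sum>j<m. \<Sum>k<m. cnj (v j) * v k * cis (- (of_int (int j - int k) * t)))"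
proof -
  have "complex_of_real ((cmod (\<Sum>k<m. v k * cis (real k * t)))\<^sup>2) =
        cnj (\<Sum>k<m. v k * cis (real k * t)) * (\<Sum>k<m. v k * cis (real k * t))"
    by (subst complex_norm_square) (rule mult.commute)
  also have "\<dots> = (\<Sum>j<m. cnj (v j) * cis (- (real j * t))) * (\<Sum>k<m. v k * cis (real k * t))"
    by (simp add: cis_cnj)
  also have "\<dots> = (\<Sum>j<m. \<Sum>k<m. cnj (v j) * cis (- (real j * t)) * (v k * cis (real k * t)))"
    by (simp add: sum_product)
  also have "\<dots> = (\<Sum>j<m. \<Sum>k<m. cnj (v j) * v k * cis (- (of_int (int j - int k) * t)))"
    by (intro sum.cong refl) (simp add: algebra_simps cis_mult)
  finally show ?thesis .
qed

lemma quad_g: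
  fixes v :: "nat \<Rightarrow> complex"
  shows "((\<lambda>t. g_fun (cis t) * of_real ((cmod (\<Sum>k<m. v k * cis (real k * t)))\<^sup>2)) has_integral
     (\<Sum>j<m. \<Sum>k<m. cnj (v j) * v k * (2 * pi * g_coeff (int j - int k)))) {0..2*pi}"
  unfolding quad_expand sum_distrib_left
proof (intro has_integral_sum finite_lessThan)
  fix j k
  show "((\<lambda>t. g_fun (cis t) * (cnj (v j) * v k * cis (- (of_int (int j - int k) * t)))) has_integral
      (cnj (v j) * v k * (2 * pi * g_coeff (int j - int k)))) {0..2*pi}"
    by (rule has_integral_eqI[OF has_integral_mult_right[OF g_fun_fourier_has_integral[of "int j - int k"], of "cnj (v j) * v k"]])
       (auto simp: algebra_simps)
qed

lemma quad_1:
  fixes v :: "nat \<Rightarrow> complex"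
  shows "((\<lambda>t. of_real ((cmod (\<Sum>k<m. v k * cis (real k * t)))\<^sup>2)) has_integral
     (\<Sum>j<m. \<Sum>k<m. cnj (v j) * v k * (if j = k then 2 * pi else 0))) {0..2*pi}"
proof -
  have "((\<lambda>t. cnj (v j) * v k * cis (- (of_int (int j - int k) * t))) has_integral
      (cnj (v j) * v k * (if j = k then 2 * pi else 0))) {0..2*pi}" for j k
    by (rule has_integral_eqI[OF has_integral_mult_right[OF cis_int_has_integral[of "int k - int j"], of "cnj (v j) * v k"]])
       (auto simp: algebra_simps)
  then show ?thesis unfolding quad_expand
    by (intro has_integral_sum finite_lessThan) auto
qed



lemma toeplitz_inj:
  fixes v :: "complex vec"
  assumes lam: "lam \<notin> complex_of_real ` {-1..1}"
    and v: "v \<in> carrier_vec m"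
    and Tv: "toeplitz_mat m (\<lambda>z. g_fun z + lam) *\<^sub>v v = 0\<^sub>v m"
  shows "v = 0\<^sub>v m"
proof -
  define vf where "vf k = v $ k" for k
  define h where "h t = (cmod (\<Sum>k<m. vf k * cis (real k * t)))\<^sup>2" for t
  have hc: "continuous_on A h" for A unfolding h_def by (intro continuous_intros)
  define I where "I a b = integral {a..b} h" for a b
  have hI: "(h has_integral I a b) {a..b}" for a b
    unfolding I_def by (rule integrable_integral[OF integrable_continuous_interval[OF hc]])
  have hIc: "((\<lambda>t. complex_of_real (h t)) has_integral complex_of_real (I a b)) {a..b}" for a b
    by (rule has_integral_of_real[OF hI])
  have Inn: "I a b \<ge> 0" if "a \<le> b" for a b
    using has_integral_nonneg[OF hI, of a b] by (simp add: h_def)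
  define I1 I2 I3 where "I1 = I 0 (pi/2)" and "I2 = I (pi/2) (3*pi/2)" and "I3 = I (3*pi/2) (2*pi)"
  have I123: "I1 \<ge> 0" "I2 \<ge> 0" "I3 \<ge> 0" unfolding I1_def I2_def I3_def by (auto intro!: Inn)
  have "((\<lambda>t. g_fun (cis t) * complex_of_real (h t)) has_integral
         (complex_of_real I1 - complex_of_real I2 + complex_of_real I3)) {0..2*pi}"
    unfolding I1_def I2_def I3_def by (intro g_fun_has_integral hIc)
  with quad_g[of vf m] have Qg: "(\<Sum>j<m. \<Sum>k<m. cnj (vf j) * vf k * (2 * pi * g_coeff (int j - int k)))
      = complex_of_real (I1 - I2 + I3)"
    unfolding h_def by (auto dest: has_integral_unique)
  have h12: "(h has_integral (I1 + I2)) {0..3*pi/2}"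
    unfolding I1_def I2_def by (rule has_integral_combine[OF _ _ hI hI]) auto
  have "(h has_integral (I1 + I2 + I3)) {0..2*pi}"
    unfolding I3_def by (rule has_integral_combine[OF _ _ h12 hI]) auto
  from has_integral_of_real[OF this] quad_1[of vf m]
  have Q1: "(\<Sum>j<m. \<Sum>k<m. cnj (vf j) * vf k * (if j = k then 2 * pi else 0)) = complex_of_real (I1 + I2 + I3)"
    unfolding h_def by (auto dest: has_integral_unique)
  have Q1': "(\<Sum>j<m. \<Sum>k<m. cnj (vf j) * vf k * (if j = k then 2 * pi else 0)) = 2 * pi * (\<Sum>j<m. cnj (vf j) * vf j)"
    by (simp add: sum_distrib_left algebra_simps if_distrib sum.delta cong: if_cong)
  have row: "(\<Sum>k<m. (g_coeff (int j - int k) + (if int j - int k = 0 then lam else 0)) * vf k) = 0" if "j < m" for j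
  proof -
    have "(toeplitz_mat m (\<lambda>z. g_fun z + lam) *\<^sub>v v) $ j = 0" using Tv that by simp
    then show ?thesis using that v
      by (simp add: toeplitz_mat_def scalar_prod_def fourier_coeff_phi vf_def atLeast0LessThan)
  qed
  have r0: "(\<Sum>j<m. cnj (vf j) * (\<Sum>k<m. (g_coeff (int j - int k) + (if int j - int k = 0 then lam else 0)) * vf k)) = 0"
    using row by simp
  have r1: "(\<Sum>j<m. cnj (vf j) * (\<Sum>k<m. (g_coeff (int j - int k) + (if int j - int k = 0 then lam else 0)) * vf k))
     = (\<Sum>j<m. \<Sum>k<m. cnj (vf j) * vf k * g_coeff (int j - int k) + (if j = k then lam * (cnj (vf j) * vf k) else 0))"
    unfolding sum_distrib_left
  proof (intro sum.cong refl)
    fix j k assume "j \<in> {..<m}" "k \<in> {..<m}"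
    show "cnj (vf j) * ((g_coeff (int j - int k) + (if int j - int k = 0 then lam else 0)) * vf k) =
      cnj (vf j) * vf k * g_coeff (int j - int k) + (if j = k then lam * (cnj (vf j) * vf k) else 0)"
      by (cases "j = k") (simp_all add: algebra_simps)
  qed
  have r2: "(\<Sum>j<m. \<Sum>k<m. cnj (vf j) * vf k * g_coeff (int j - int k) + (if j = k then lam * (cnj (vf j) * vf k) else 0))
     = (\<Sum>j<m. \<Sum>k<m. cnj (vf j) * vf k * g_coeff (int j - int k)) + lam * (\<Sum>j<m. cnj (vf j) * vf j)"
    unfolding sum.distrib sum.delta'[OF finite_lessThan] sum_distrib_left by simp
  have "(\<Sum>j<m. \<Sum>k<m. cnj (vf j) * vf k * g_coeff (int j - int k)) + lam * (\<Sum>j<m. cnj (vf j) * vf j) = 0"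
    using r0 unfolding r1 r2 .
  then have "2 * pi * ((\<Sum>j<m. \<Sum>k<m. cnj (vf j) * vf k * g_coeff (int j - int k)) + lam * (\<Sum>j<m. cnj (vf j) * vf j)) = 0"
    by simp
  then have "2 * pi * (\<Sum>j<m. \<Sum>k<m. cnj (vf j) * vf k * g_coeff (int j - int k)) + lam * (2 * pi * (\<Sum>j<m. cnj (vf j) * vf j)) = 0"
    by (simp only: distrib_left mult.left_commute[of lam])
  moreover have "2 * pi * (\<Sum>j<m. \<Sum>k<m. cnj (vf j) * vf k * g_coeff (int j - int k))
      = (\<Sum>j<m. \<Sum>k<m. cnj (vf j) * vf k * (2 * pi * g_coeff (int j - int k)))"
    unfolding sum_distrib_left by (intro sum.cong refl) (simp only: mult_ac)
  ultimately have key: "complex_of_real (I1 - I2 + I3) + lam * complex_of_real (I1 + I2 + I3) = 0"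
    by (simp only: Qg Q1[symmetric] Q1')
  have S0: "I1 + I2 + I3 = 0"
  proof (rule ccontr)
    define A where "A = I1 - I2 + I3"
    define S where "S = I1 + I2 + I3"
    assume "I1 + I2 + I3 \<noteq> 0"
    then have Sp: "S > 0" using I123 by (simp add: S_def)
    have key': "complex_of_real A + lam * complex_of_real S = 0" using key unfolding A_def S_def .
    have "lam * complex_of_real S = - complex_of_real A" using minus_unique[OF key'] by simp
    then have eqS: "lam * complex_of_real S = - complex_of_real A" .
    have Sne: "complex_of_real S \<noteq> 0" using Sp by simp
    have "lam = (lam * complex_of_real S) / complex_of_real S" using Sne by simp
    also have "\<dots> = - complex_of_real A / complex_of_real S" by (simp only: eqS)
    finally have "lam = - complex_of_real A / complex_of_real S" .
    then have "lam = complex_of_real (- A / S)" by simp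
    moreover have "- A / S \<in> {-1..1}"
      using Sp I123 by (auto simp: field_simps A_def S_def)
    ultimately have "lam \<in> complex_of_real ` {-1..1}" by (rule image_eqI)
    then show False using lam by blast
  qed
  then have "(\<Sum>j<m. cnj (vf j) * vf j) = 0" using Q1 Q1' by simp
  then have "(\<Sum>j<m. complex_of_real ((cmod (vf j))\<^sup>2)) = 0"
    unfolding complex_norm_square by (simp only: mult.commute)
  then have "(\<Sum>j<m. (cmod (vf j))\<^sup>2) = 0"
    by (metis of_real_eq_0_iff of_real_sum)
  then have "\<forall>j\<in>{..<m}. (cmod (vf j))\<^sup>2 = 0"
    by (subst sum_nonneg_eq_0_iff[symmetric]) auto
  then show ?thesis using v by (intro eq_vecI) (auto simp: vf_def)
qed



lemma ae_negligible:
  assumes "AE t in lebesgue_on S. P t" "S \<in> sets lebesgue"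
  obtains N where "negligible N" "\<And>t. t \<in> S - N \<Longrightarrow> P t"
proof -
  from AE_E[OF assms(1)] obtain N where N: "{x \<in> space (lebesgue_on S). \<not> P x} \<subseteq> N"
    "emeasure (lebesgue_on S) N = 0" "N \<in> sets (lebesgue_on S)" by blast
  then have "N \<in> null_sets (lebesgue_on S)" by auto
  then have "N \<in> null_sets lebesgue" using null_sets_restrict_space[OF assms(2)] by blast
  then have "negligible N" by (simp add: negligible_iff_null_sets)
  moreover have "\<And>t. t \<in> S - N \<Longrightarrow> P t" using N(1) by auto
  ultimately show ?thesis using that by blast
qed

lemma ae_bound:
  fixes u :: "real \<Rightarrow> complex"
  assumes u: "(u has_integral E) S" and b: "b integrable_on S" and N: "negligible N"
    and le: "\<And>t. t \<in> S - N \<Longrightarrow> norm (u t) \<le> b t"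
  shows "norm E \<le> integral S b"
proof -
  have negl: "negligible (S - (S - N))" by (rule negligible_subset[OF N]) auto
  have "(u has_integral E) (S - N)"
    using u has_integral_spike_set_eq[where f=u and S=S and T="S - N"] by (auto intro: negligible_subset[OF N])
  moreover have "b integrable_on (S - N)"
    using b by (rule integrable_spike_set) (auto intro: negligible_subset[OF N])
  ultimately have "norm (integral (S - N) u) \<le> integral (S - N) b"
    by (intro integral_norm_bound_integral le) auto
  moreover have "integral (S - N) b = integral S b"
    by (rule integral_subset_negligible[OF _ negl]) auto
  ultimately show ?thesis using \<open>(u has_integral E) (S - N)\<close> by (simp add: integral_unique)
qed

lemma L2_to_L1:
  fixes D :: "real \<Rightarrow> real \<Rightarrow> real"
  assumes D0: "\<And>r t. D r t \<ge> 0"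
    and int2: "\<forall>\<^sub>F r in F. (\<lambda>t. (D r t)\<^sup>2) integrable_on {0..2*pi}"
    and lim2: "((\<lambda>r. integral {0..2*pi} (\<lambda>t. (D r t)\<^sup>2)) \<longlongrightarrow> 0) F"
  shows "\<forall>\<^sub>F r in F. D r integrable_on {0..2*pi}"
    and "((\<lambda>r. integral {0..2*pi} (D r)) \<longlongrightarrow> 0) F"
proof -
  have intD: "D r integrable_on {0..2*pi}" if i2: "(\<lambda>t. (D r t)\<^sup>2) integrable_on {0..2*pi}" for r
  proof -
    have m2: "(\<lambda>t. (D r t)\<^sup>2) \<in> borel_measurable (lebesgue_on {0..2*pi})"
      by (rule integrable_imp_measurable[OF i2])
    have "(\<lambda>t. sqrt ((D r t)\<^sup>2)) \<in> borel_measurable (lebesgue_on {0..2*pi})"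
      by (rule measurable_compose[OF m2 borel_measurable_sqrt])
    then have m: "D r \<in> borel_measurable (lebesgue_on {0..2*pi})"
      using D0 by (simp add: real_sqrt_abs)
    have "(\<lambda>t. 1 + (D r t)\<^sup>2) integrable_on {0..2*pi}"
      by (intro integrable_add i2 integrable_const_ivl)
    moreover have "\<bar>D r t\<bar> \<le> 1 + (D r t)\<^sup>2" for t
    proof (cases "D r t \<le> 1")
      case True
      then show ?thesis using D0[of r t] by (simp add: power2_eq_square add_increasing2)
    next
      case False
      then have "D r t \<le> D r t * D r t" by (simp add: mult_le_cancel_left1)
      then show ?thesis using D0[of r t] by (simp add: power2_eq_square)
    qed
    ultimately show ?thesis
      by (intro measurable_bounded_by_integrable_imp_integrable_real[OF m]) auto
  qed
  show ev: "\<forall>\<^sub>F r in F. D r integrable_on {0..2*pi}"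
    using int2 by eventually_elim (rule intD)
  show "((\<lambda>r. integral {0..2*pi} (D r)) \<longlongrightarrow> 0) F"
  proof (rule tendstoI)
    fix e :: real assume e: "e > 0"
    define \<epsilon> where "\<epsilon> = e / (4 * pi)"
    have \<epsilon>: "\<epsilon> > 0" using e by (simp add: \<epsilon>_def)
    have "\<forall>\<^sub>F r in F. dist (integral {0..2*pi} (\<lambda>t. (D r t)\<^sup>2)) 0 < \<epsilon> * e"
      using tendstoD[OF lim2, of "\<epsilon> * e"] \<epsilon> e by simp
    with int2 show "\<forall>\<^sub>F r in F. dist (integral {0..2*pi} (D r)) 0 < e"
    proof eventually_elim
      case (elim r)
      have iD: "D r integrable_on {0..2*pi}" by (rule intD[OF elim(1)])
      have pw: "D r t \<le> \<epsilon> / 2 + (D r t)\<^sup>2 / (2 * \<epsilon>)" for t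
      proof -
        have "0 \<le> (D r t - \<epsilon>)\<^sup>2" by simp
        then have "2 * \<epsilon> * D r t \<le> \<epsilon>\<^sup>2 + (D r t)\<^sup>2" by (simp add: power2_eq_square algebra_simps)
        then show ?thesis using \<epsilon> by (simp add: field_simps power2_eq_square)
      qed
      have "integral {0..2*pi} (D r) \<le> integral {0..2*pi} (\<lambda>t. \<epsilon> / 2 + (D r t)\<^sup>2 / (2 * \<epsilon>))"
        by (rule integral_le[OF iD]) (use pw elim(1) in \<open>auto intro!: integrable_add integrable_on_divide integrable_const_ivl\<close>)
      also have "\<dots> = \<epsilon> / 2 * (2 * pi) + integral {0..2*pi} (\<lambda>t. (D r t)\<^sup>2) / (2 * \<epsilon>)"
      proof -
        have c: "((\<lambda>t. \<epsilon> / 2) has_integral (\<epsilon> / 2 * (2 * pi))) {0..2*pi}"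
          using has_integral_const_real[of "\<epsilon> / 2" 0 "2*pi"] by (simp add: mult.commute)
        have "((\<lambda>t. \<epsilon> / 2 + (D r t)\<^sup>2 / (2 * \<epsilon>)) has_integral
            (\<epsilon> / 2 * (2 * pi) + integral {0..2*pi} (\<lambda>t. (D r t)\<^sup>2) / (2 * \<epsilon>))) {0..2*pi}"
          by (intro has_integral_add c has_integral_divide integrable_integral elim(1))
        from integral_unique[OF this] show ?thesis by simp
      qed
      also have "\<dots> < e / 2 + e / 2"
      proof -
        have "integral {0..2*pi} (\<lambda>t. (D r t)\<^sup>2) < \<epsilon> * e" using elim(2)
          by (simp add: dist_real_def)
        then have "integral {0..2*pi} (\<lambda>t. (D r t)\<^sup>2) / (2 * \<epsilon>) < e / 2"
          using \<epsilon> by (simp add: field_simps)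
        moreover have "\<epsilon> / 2 * (2 * pi) = e / 4" by (simp add: \<epsilon>_def)
        ultimately show ?thesis using e by linarith
      qed
      finally have "integral {0..2*pi} (D r) < e" by simp
      moreover have "integral {0..2*pi} (D r) \<ge> 0"
        by (rule integral_nonneg[OF iD]) (simp add: D0)
      ultimately show ?case by (simp add: dist_real_def)
    qed
  qed
qed

lemma limit_zero:
  fixes E :: "real \<Rightarrow> complex"
  assumes E: "(E \<longlongrightarrow> E0) (at_left 1)" and le: "\<forall>\<^sub>F r in at_left 1. norm (E r) \<le> B r"
    and B: "(B \<longlongrightarrow> 0) (at_left 1)"
  shows "E0 = 0"
proof -
  have "(E \<longlongrightarrow> 0) (at_left 1)"
    by (rule Lim_null_comparison[OF le B])
  with E show ?thesis using tendsto_unique trivial_limit_at_left_real by blast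
qed



lemma aux_ring1:
  fixes c d x y p :: complex
  assumes "c * d = 1"
  shows "c * (x * p + y * ((p - 1) * d)) + (x * (- (p - 1) * c) + y * (2 - p)) = c * x + y"
proof -
  have "c * (x * p + y * ((p - 1) * d)) + (x * (- (p - 1) * c) + y * (2 - p)) = c * x + y + y * (p - 1) * (c * d - 1)"
    by (simp add: algebra_simps)
  then show ?thesis using assms by simp
qed

lemma aux_ring2:
  fixes c d x y p :: complex
  assumes "c * d = 1"
  shows "(x * p + y * ((p - 1) * d)) - x = (p - 1) * d * (c * x + y)"
proof -
  have "(p - 1) * d * (c * x + y) = (p - 1) * x * (c * d) + y * ((p - 1) * d)"
    by (simp add: algebra_simps)
  then show ?thesis using assms by (simp add: algebra_simps)
qed

lemma jump_entries:
  fixes A :: "complex^2^2" and \<phi> :: "complex \<Rightarrow> complex" and t :: real and m :: nat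
  defines "B \<equiv> A ** jump_mat m \<phi> (cis t)"
  shows "cis (real m * t) * entry B 1 1 + entry B 1 2 = cis (real m * t) * entry A 1 1 + entry A 1 2"
    and "entry B 1 1 - entry A 1 1 = (\<phi> (cis t) - 1) * cis (- (real m * t)) * (cis (real m * t) * entry A 1 1 + entry A 1 2)"
proof -
  have c1: "cis (real m * t) * cis (- (real m * t)) = 1" by (simp add: cis_mult)
  have zm: "cis t ^ m = cis (real m * t)" by (rule Complex.DeMoivre)
  have izm: "inverse (cis t) ^ m = cis (- (real m * t))" by (simp add: Complex.DeMoivre)
  have izm': "cis (- t) ^ m = cis (- (real m * t))" by (simp add: Complex.DeMoivre)
  have B11: "entry B 1 1 = entry A 1 1 * \<phi> (cis t) + entry A 1 2 * ((\<phi> (cis t) - 1) * cis (- (real m * t)))"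
    unfolding B_def entry_def jump_mat_def matrix_matrix_mult_def by (simp add: sum_2 izm izm')
  have B12: "entry B 1 2 = entry A 1 1 * (- (\<phi> (cis t) - 1) * cis (real m * t)) + entry A 1 2 * (2 - \<phi> (cis t))"
    unfolding B_def entry_def jump_mat_def matrix_matrix_mult_def by (simp add: sum_2 zm)
  show "cis (real m * t) * entry B 1 1 + entry B 1 2 = cis (real m * t) * entry A 1 1 + entry A 1 2"
    unfolding B11 B12 by (rule aux_ring1[OF c1])
  show "entry B 1 1 - entry A 1 1 = (\<phi> (cis t) - 1) * cis (- (real m * t)) * (cis (real m * t) * entry A 1 1 + entry A 1 2)"
    unfolding B11 by (rule aux_ring2[OF c1])
qed



lemma final_linalg:
  fixes a :: "nat \<Rightarrow> complex"
  assumes lam: "lam \<notin> complex_of_real ` {-1..1}"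
    and eq: "\<And>i. i < m \<Longrightarrow> (\<Sum>n<m. fourier_coeff (\<lambda>z. g_fun z + lam) (int i - int n) * a (m - n)) = - g_coeff (int i - int m)"
  shows "Matrix.scalar_prod (the (mat_inverse (toeplitz_mat m (\<lambda>z. g_fun z + lam))) *\<^sub>v g_vec1 m) (g_vec1 m)
         = - (2 / pi) * (\<Sum>l = 1..m. of_real (sin (real l * pi / 2) / real l) * a l)"
proof -
  define T where "T = toeplitz_mat m (\<lambda>z. g_fun z + lam)"
  have T: "T \<in> carrier_mat m m" by (simp add: T_def toeplitz_mat_def)
  have "Determinant.det T \<noteq> 0"
  proof
    assume "Determinant.det T = 0"
    then obtain v where v: "v \<in> carrier_vec m" "v \<noteq> 0\<^sub>v m" "T *\<^sub>v v = 0\<^sub>v m"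
      using det_0_iff_vec_prod_zero[OF T] by blast
    then show False using toeplitz_inj[OF lam v(1)] by (simp add: T_def)
  qed
  then have "T \<in> Units (ring_mat TYPE(complex) m ())" by (rule det_non_zero_imp_unit[OF T])
  then obtain B where B: "mat_inverse T = Some B" using mat_inverse(1)[OF T, where b="()"] by (cases "mat_inverse T") auto
  from mat_inverse(2)[OF T B] have BT: "B * T = 1\<^sub>m m" and Bc: "B \<in> carrier_mat m m" by auto
  define w where "w = Matrix.vec m (\<lambda>i. - a (m - i))"
  have wc: "w \<in> carrier_vec m" by (simp add: w_def)
  have Tw: "T *\<^sub>v w = g_vec1 m"
  proof (rule eq_vecI)
    fix i assume "i < dim_vec (g_vec1 m)"
    then have i: "i < m" by (simp add: g_vec1_def)
    have "(T *\<^sub>v w) $ i = (\<Sum>n<m. fourier_coeff (\<lambda>z. g_fun z + lam) (int i - int n) * (- a (m - n)))"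
      using i by (simp add: T_def toeplitz_mat_def w_def scalar_prod_def atLeast0LessThan)
    also have "\<dots> = g_coeff (int i - int m)"
      using eq[OF i] by (simp add: sum_negf)
    finally show "(T *\<^sub>v w) $ i = g_vec1 m $ i" using i by (simp add: g_vec1_def)
  qed (simp add: T_def toeplitz_mat_def g_vec1_def)
  have "B *\<^sub>v g_vec1 m = w"
    unfolding Tw[symmetric] using assoc_mult_mat_vec[OF Bc T wc] BT wc by simp
  then have "Matrix.scalar_prod (the (mat_inverse T) *\<^sub>v g_vec1 m) (g_vec1 m)
      = (\<Sum>i<m. - a (m - i) * g_coeff (int i - int m))"
    using B by (simp add: scalar_prod_def g_vec1_def w_def atLeast0LessThan)
  also have "\<dots> = - (\<Sum>i<m. a (Suc (m - Suc i)) * g_coeff (- int (Suc (m - Suc i))))"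
    by (simp add: sum_negf[symmetric] Suc_diff_Suc of_nat_diff)
  also have "\<dots> = - (\<Sum>i<m. a (Suc i) * g_coeff (- int (Suc i)))"
    using sum.nat_diff_reindex[of "\<lambda>i. a (Suc i) * g_coeff (- int (Suc i))" m] by simp
  also have "\<dots> = - (\<Sum>l = 1..m. a l * g_coeff (- int l))"
    using sum.atLeast1_atMost_eq[of "\<lambda>l. a l * g_coeff (- int l)" m] by simp
  also have "\<dots> = - (2 / pi) * (\<Sum>l = 1..m. of_real (sin (real l * pi / 2) / real l) * a l)"
    unfolding sum_distrib_left sum_negf[symmetric] by (intro sum.cong refl) (auto simp: g_coeff_def field_simps)
  finally show ?thesis by (simp add: T_def)
qed



lemma entry_norm_le: "norm (entry A i j) \<le> norm A"
  unfolding entry_def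
  using Finite_Cartesian_Product.norm_nth_le[of "A $ i" j] Finite_Cartesian_Product.norm_nth_le[of A i] by linarith

lemma entry_diff: "entry (A - B) i j = entry A i j - entry B i j"
  unfolding entry_def by simp

lemma filterlim_2_minus: "filterlim (\<lambda>r::real. 2 - r) (at_right 1) (at_left 1)"
  unfolding filterlim_at
proof
  show "\<forall>\<^sub>F x in at_left (1::real). 2 - x \<in> {1::real<..} \<and> 2 - x \<noteq> 1"
  proof -
    have "eventually (\<lambda>x. x \<in> {0<..<1}) (at_left (1::real))" by (rule eventually_at_left_real) simp
    then show ?thesis by eventually_elim auto
  qed
  have "((\<lambda>r::real. 2 - r) \<longlongrightarrow> 2 - 1) (at_left 1)"
    by (intro tendsto_intros)
  then show "((\<lambda>r::real. 2 - r) \<longlongrightarrow> 1) (at_left 1)" by simp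
qed

lemma cont_circle:
  assumes "f holomorphic_on A" "\<And>t. of_real r * cis t \<in> A"
  shows "continuous_on B (\<lambda>t. f (of_real r * cis t))"
proof -
  have "continuous_on B (\<lambda>t. of_real r * cis t)" by (intro continuous_intros)
  moreover have "(\<lambda>t. of_real r * cis t) ` B \<subseteq> A" using assms(2) by auto
  ultimately show ?thesis
    by (rule continuous_on_compose2[OF holomorphic_on_imp_continuous_on[OF assms(1)]])
qed

lemma bound_interior:
  fixes a b p1 p2 c :: complex and q Dp W :: real
  assumes "cmod c = 1" "0 \<le> q" "q \<le> 1" "cmod (a - p1) \<le> Dp" "cmod (b - p2) \<le> Dp" "cmod p1 \<le> W"
  shows "cmod (of_real q * c * a + b - (c * p1 + p2)) \<le> 3 * Dp + (1 - q) * W"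
proof -
  have e: "of_real q * c * a + b - (c * p1 + p2) = c * (a - p1) - of_real (1 - q) * (c * a) + (b - p2)"
    by (simp add: algebra_simps)
  have "cmod (c * (a - p1) - of_real (1 - q) * (c * a) + (b - p2)) \<le> cmod (c * (a - p1)) + cmod (of_real (1 - q) * (c * a)) + cmod (b - p2)"
    by (rule order.trans[OF norm_triangle_ineq add_right_mono[OF norm_triangle_ineq4]])
  also have "\<dots> = cmod (a - p1) + (1 - q) * cmod a + cmod (b - p2)"
    using assms(1,3) by (simp only: norm_mult norm_of_real)
  also have "\<dots> \<le> Dp + (1 - q) * (Dp + W) + Dp"
  proof -
    have "cmod a \<le> cmod (a - p1) + cmod p1" using norm_triangle_sub[of a p1] by simp
    then have "cmod a \<le> Dp + W" using assms by linarith
    then have "(1 - q) * cmod a \<le> (1 - q) * (Dp + W)" using assms by (intro mult_left_mono) auto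
    then show ?thesis using assms by linarith
  qed
  also have "\<dots> \<le> 3 * Dp + (1 - q) * W"
  proof -
    have "Dp \<ge> 0" using assms(4) norm_ge_zero order.trans by blast
    then have "(1 - q) * Dp \<le> Dp" using assms by (simp add: mult_left_le_one_le)
    then show ?thesis by (simp add: algebra_simps)
  qed
  finally show ?thesis unfolding e .
qed

lemma aux_sub3: "(p::complex) = q \<Longrightarrow> a - b = (a - p) - (b - q)"
  by simp

lemma bound_eq2:
  fixes a1 a2 p1 p2 H Hp d c :: complex and Dp Dm Bp C :: real
  assumes "cmod (a1 - p1) \<le> Dp" "cmod (a2 - p2) \<le> Dm" "cmod (H - Hp) \<le> Bp" "cmod d \<le> C"
    "cmod c = 1" "p1 - p2 = d * c * Hp"
  shows "cmod (a1 - a2 - d * c * H) \<le> Dp + Dm + C * Bp"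
proof -
  have e: "a1 - a2 - d * c * H = (a1 - p1) - (a2 - p2) - d * c * (H - Hp)"
    using assms(6) by (simp add: algebra_simps)
  have "cmod ((a1 - p1) - (a2 - p2) - d * c * (H - Hp)) \<le> cmod (a1 - p1) + cmod (a2 - p2) + cmod (d * c * (H - Hp))"
    by (rule order.trans[OF norm_triangle_ineq4 add_right_mono[OF norm_triangle_ineq4]])
  also have "cmod (d * c * (H - Hp)) = cmod d * cmod (H - Hp)" using assms(5) by (simp add: norm_mult)
  also have "cmod d * cmod (H - Hp) \<le> C * Bp"
  proof -
    have C0: "0 \<le> C" using assms(4) norm_ge_zero[of d] by linarith
    show ?thesis by (rule mult_mono) (use assms C0 in auto)
  qed
  finally show ?thesis unfolding e using assms(1,2) by linarith
qed

lemma lim_pow_left: "((\<lambda>r::real. (of_real r :: complex) ^ k) \<longlongrightarrow> 1) (at_left 1)"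
proof -
  have "((\<lambda>r::real. (of_real r :: complex) ^ k) \<longlongrightarrow> (of_real 1) ^ k) (at_left 1)"
    by (intro tendsto_intros)
  then show ?thesis by simp
qed

lemma lim_div_left: "((\<lambda>r::real. (B :: complex) / (of_real (2 - r)) ^ k) \<longlongrightarrow> B) (at_left 1)"
proof -
  have "((\<lambda>r::real. (B :: complex) / (of_real (2 - r)) ^ k) \<longlongrightarrow> B / (of_real (2 - 1)) ^ k) (at_left 1)"
    by (intro tendsto_intros) auto
  then show ?thesis by simp
qed

theorem proposition2:
  fixes m :: nat and lam :: complex and Y :: "complex \<Rightarrow> complex^2^2"
    and M :: "nat \<Rightarrow> complex^2^2"
  assumes lam: "lam \<notin> complex_of_real ` {-1..1}"
    and Y: "RHP_YK m (\<lambda>z. g_fun z + lam) Y"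
    and M: "\<And>z i j. norm z > 1 \<Longrightarrow>
              (\<lambda>l. entry (M (Suc l)) i j / z ^ Suc l) sums (entry (Y z) i j - (if i = j then 1 else 0))"
  shows "Matrix.scalar_prod (the (mat_inverse (toeplitz_mat m (\<lambda>z. g_fun z + lam))) *\<^sub>v g_vec1 m) (g_vec1 m)
         = - (2 / pi) * (\<Sum>l = 1..m. of_real (sin (real l * pi / 2) / real l) * entry (M l) 1 1)"
proof -
  define S where "S = {0..2*pi}"
  have Sleb: "S \<in> sets lebesgue" by (simp add: S_def)
  define y where "y i j z = entry (Y z) i j" for i j z
  from Y obtain Yp Ym where hol: "\<And>i j. (\<lambda>z. entry (Y z) i j) holomorphic_on (- sphere 0 1)"
     and bp: "L2_boundary_value Y Yp (at_left 1)" and bm: "L2_boundary_value Y Ym (at_right 1)"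
     and jump: "AE t in lebesgue_on {0..2*pi}. Yp (cis t) = Ym (cis t) ** jump_mat m (\<lambda>z. g_fun z + lam) (cis t)"
    unfolding RHP_YK_def by blast
  obtain N where N: "negligible N"
    and jN: "\<And>t. t \<in> S - N \<Longrightarrow> Yp (cis t) = Ym (cis t) ** jump_mat m (\<lambda>z. g_fun z + lam) (cis t)"
    using ae_negligible[OF jump] unfolding S_def by (metis Sleb S_def)
  have holb: "y i j holomorphic_on ball 0 1" for i j
    using hol[of i j] unfolding y_def by (rule holomorphic_on_subset) auto
  have holo: "y i j holomorphic_on - cball 0 1" for i j
    using hol[of i j] unfolding y_def by (rule holomorphic_on_subset) auto
  define Dp where "Dp r t = norm (Y (of_real r * cis t) - Yp (cis t))" for r t
  define Dm where "Dm r t = norm (Y (of_real r * cis t) - Ym (cis t))" for r t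
  have bp1: "\<forall>\<^sub>F r in at_left 1. (\<lambda>t. (Dp r t)\<^sup>2) integrable_on {0..2*pi}"
    and bp2: "((\<lambda>r. integral {0..2*pi} (\<lambda>t. (Dp r t)\<^sup>2)) \<longlongrightarrow> 0) (at_left 1)"
    using bp unfolding L2_boundary_value_def Dp_def by auto
  have bm1: "\<forall>\<^sub>F r in at_right 1. (\<lambda>t. (Dm r t)\<^sup>2) integrable_on {0..2*pi}"
    and bm2: "((\<lambda>r. integral {0..2*pi} (\<lambda>t. (Dm r t)\<^sup>2)) \<longlongrightarrow> 0) (at_right 1)"
    using bm unfolding L2_boundary_value_def Dm_def by auto
  have Dp0: "Dp r t \<ge> 0" for r t by (simp add: Dp_def)
  have Dm0: "Dm r t \<ge> 0" for r t by (simp add: Dm_def)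
  have Dp1: "\<forall>\<^sub>F r in at_left 1. Dp r integrable_on S" and Dp2: "((\<lambda>r. integral S (Dp r)) \<longlongrightarrow> 0) (at_left 1)"
    using L2_to_L1[of Dp, OF Dp0 bp1 bp2] unfolding S_def by auto
  have Dm1: "\<forall>\<^sub>F r in at_right 1. Dm r integrable_on S" and Dm2: "((\<lambda>r. integral S (Dm r)) \<longlongrightarrow> 0) (at_right 1)"
    using L2_to_L1[of Dm, OF Dm0 bm1 bm2] unfolding S_def by auto
  have Dm1': "\<forall>\<^sub>F r in at_left 1. Dm (2 - r) integrable_on S"
    using eventually_compose_filterlim[OF Dm1 filterlim_2_minus] .
  have Dm2': "((\<lambda>r. integral S (Dm (2 - r))) \<longlongrightarrow> 0) (at_left 1)"
    using filterlim_compose[OF Dm2 filterlim_2_minus] .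
  define Hf where "Hf z = z ^ m * y 1 1 z + y 1 2 z" for z
  have holH: "Hf holomorphic_on ball 0 1" unfolding Hf_def by (intro holomorphic_intros holb)
  define h where "h n = (deriv ^^ n) Hf 0 / fact n" for n
  have Hser: "(\<lambda>n. h n * w ^ n) sums Hf w" if "norm w < 1" for w
    using holomorphic_power_series[OF holH, of w] that by (simp add: h_def)
  define c11 where "c11 n = (deriv ^^ n) (y 1 1) 0 / fact n" for n
  have Yser: "(\<lambda>n. c11 n * w ^ n) sums y 1 1 w" if "norm w < 1" for w
    using holomorphic_power_series[OF holb, of w] that by (simp add: c11_def)
  have IH: "((\<lambda>t. Hf (of_real r * cis t) * cis (- (of_int n * t))) has_integral
      (2 * pi * (if n \<ge> 0 then h (nat n) * of_real r ^ nat n else 0))) S" if "0 \<le> r" "r < 1" for r n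
    unfolding S_def by (rule ps_interior_has_integral[OF Hser that])
  have IY: "((\<lambda>t. y 1 1 (of_real r * cis t) * cis (- (of_int n * t))) has_integral
      (2 * pi * (if n \<ge> 0 then c11 (nat n) * of_real r ^ nat n else 0))) S" if "0 \<le> r" "r < 1" for r n
    unfolding S_def by (rule ps_interior_has_integral[OF Yser that])
  define ex where "ex i j s n = (if n = 0 \<and> i = j then 1 else 0) +
     (if n < 0 then entry (M (nat (- n))) i j else 0) / of_real s ^ nat (- n)" for i j and s :: real and n :: int
  have IE: "((\<lambda>t. y i j (of_real s * cis t) * cis (- (of_int n * t))) has_integral (2 * pi * ex i j s n)) S"
    if "s > 1" for i j s n
  proof -
    have G: "(\<lambda>l. entry (M (Suc l)) i j / z ^ Suc l) sums (y i j z - (if i = j then 1 else 0))" if "norm z > 1" for z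
      using M[OF that] by (simp add: y_def)
    have a: "((\<lambda>t. (y i j (of_real s * cis t) - (if i = j then 1 else 0)) * cis (- (of_int n * t))) has_integral
        (2 * pi * (if n < 0 then entry (M (nat (- n))) i j / of_real s ^ nat (- n) else 0))) {0..2*pi}"
      by (rule ps_exterior_has_integral[where b="\<lambda>l. entry (M l) i j" and G="\<lambda>z. y i j z - (if i = j then 1 else 0)", OF G that])
    note b = has_integral_mult_right[OF cis_int_has_integral[of "- n"], of "(if i = j then 1 else 0 :: complex)"]
    from has_integral_add[OF a b] show ?thesis unfolding S_def
      by (rule has_integral_eqI) (auto simp: ex_def algebra_simps)
  qed
  have ev01: "\<forall>\<^sub>F r in at_left (1::real). r \<in> {0<..<1}" by (rule eventually_at_left_real) simp
  obtain r0 where r0: "r0 \<in> {0<..<1}" "Dp r0 integrable_on S"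
    using eventually_happens'[OF trivial_limit_at_left_real eventually_conj[OF ev01 Dp1]] by blast
  have cy: "continuous_on B (\<lambda>t. y i j (of_real r * cis t))" if "r \<noteq> 1" "r \<ge> 0" for i j r B
  proof (cases "r < 1")
    case True
    then show ?thesis using that by (intro cont_circle[OF holb]) (auto simp: norm_mult)
  next
    case False
    then show ?thesis using that by (intro cont_circle[OF holo]) (auto simp: norm_mult)
  qed
  define yp where "yp i j t = entry (Yp (cis t)) i j" for i j t
  define ym where "ym i j t = entry (Ym (cis t)) i j" for i j t
  define Wp where "Wp t = Dp r0 t + cmod (y 1 1 (of_real r0 * cis t))" for t
  have Wpi: "Wp integrable_on S"
  proof -
    have "(\<lambda>t. cmod (y 1 1 (of_real r0 * cis t))) integrable_on S"
      unfolding S_def using r0 by (intro integrable_continuous_interval continuous_intros cy) auto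
    then show ?thesis unfolding Wp_def using r0(2) by (intro integrable_add)
  qed
  have ypD: "cmod (y i j (of_real r * cis t) - yp i j t) \<le> Dp r t" for i j r t
    unfolding y_def yp_def Dp_def entry_diff[symmetric] by (rule entry_norm_le)
  have ymD: "cmod (y i j (of_real r * cis t) - ym i j t) \<le> Dm r t" for i j r t
    unfolding y_def ym_def Dm_def entry_diff[symmetric] by (rule entry_norm_le)
  have ypW: "cmod (yp 1 1 t) \<le> Wp t" for t
  proof -
    have "cmod (yp 1 1 t) \<le> cmod (y 1 1 (of_real r0 * cis t) - yp 1 1 t) + cmod (y 1 1 (of_real r0 * cis t))"
      by (metis add.commute norm_triangle_sub norm_minus_commute)
    then show ?thesis using ypD[of 1 1 r0 t] by (simp add: Wp_def)
  qed
  define Bp where "Bp r t = 3 * Dp r t + (1 - r ^ m) * Wp t" for r t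
  have HpB: "cmod (Hf (of_real r * cis t) - (cis (real m * t) * yp 1 1 t + yp 1 2 t)) \<le> Bp r t"
    if "0 \<le> r" "r \<le> 1" for r t
  proof -
    have "Hf (of_real r * cis t) = of_real (r ^ m) * cis (real m * t) * y 1 1 (of_real r * cis t) + y 1 2 (of_real r * cis t)"
      by (simp add: Hf_def power_mult_distrib Complex.DeMoivre)
    moreover have "cmod (of_real (r ^ m) * cis (real m * t) * y 1 1 (of_real r * cis t) + y 1 2 (of_real r * cis t)
        - (cis (real m * t) * yp 1 1 t + yp 1 2 t)) \<le> 3 * Dp r t + (1 - r ^ m) * Wp t"
      by (rule bound_interior) (use that in \<open>auto simp: ypD ypW power_le_one\<close>)
    ultimately show ?thesis by (simp add: Bp_def)
  qed
  have HmB: "cmod (cis (real m * t) * y 1 1 (of_real s * cis t) + y 1 2 (of_real s * cis t) - (cis (real m * t) * ym 1 1 t + ym 1 2 t)) \<le> 2 * Dm s t" for s t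
  proof -
    have "cmod (cis (real m * t) * y 1 1 (of_real s * cis t) + y 1 2 (of_real s * cis t) - (cis (real m * t) * ym 1 1 t + ym 1 2 t))
        = cmod (cis (real m * t) * (y 1 1 (of_real s * cis t) - ym 1 1 t) + (y 1 2 (of_real s * cis t) - ym 1 2 t))"
      by (simp add: algebra_simps)
    also have "\<dots> \<le> cmod (cis (real m * t) * (y 1 1 (of_real s * cis t) - ym 1 1 t)) + cmod (y 1 2 (of_real s * cis t) - ym 1 2 t)"
      by (rule norm_triangle_ineq)
    also have "\<dots> \<le> Dm s t + Dm s t"
      using ymD[of 1 1 s t] ymD[of 1 2 s t] by (simp add: norm_mult)
    finally show ?thesis by simp
  qed
  define K where "K = 3 + cmod lam"
  have K: "K \<ge> 1" by (simp add: K_def)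
  define Bd where "Bd r t = Bp r t + 2 * Dm (2 - r) t" for r t
  have evB: "\<forall>\<^sub>F r in at_left 1. r \<in> {0<..<1} \<and> (Bd r has_integral (3 * integral S (Dp r) + (1 - r ^ m) * integral S Wp + 2 * integral S (Dm (2 - r)))) S"
    using ev01 Dp1 Dm1'
  proof eventually_elim
    case (elim r)
    have "((\<lambda>t. 3 * Dp r t + (1 - r ^ m) * Wp t + 2 * Dm (2 - r) t) has_integral
        (3 * integral S (Dp r) + (1 - r ^ m) * integral S Wp + 2 * integral S (Dm (2 - r)))) S"
      by (intro has_integral_add has_integral_mult_right integrable_integral elim Wpi)
    moreover have "Bd r = (\<lambda>t. 3 * Dp r t + (1 - r ^ m) * Wp t + 2 * Dm (2 - r) t)"
      by (simp add: fun_eq_iff Bd_def Bp_def)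
    ultimately show ?case using elim by simp
  qed
  have Blim: "((\<lambda>r. K * (3 * integral S (Dp r) + (1 - r ^ m) * integral S Wp + 2 * integral S (Dm (2 - r)))) \<longlongrightarrow> 0) (at_left 1)"
  proof -
    have "((\<lambda>r. K * (3 * integral S (Dp r) + (1 - r ^ m) * integral S Wp + 2 * integral S (Dm (2 - r)))) \<longlongrightarrow>
        K * (3 * 0 + (1 - 1 ^ m) * integral S Wp + 2 * 0)) (at_left 1)"
      by (intro tendsto_intros Dp2 Dm2')
    then show ?thesis by simp
  qed
  have HpHm: "cis (real m * t) * yp 1 1 t + yp 1 2 t = cis (real m * t) * ym 1 1 t + ym 1 2 t" if "t \<in> S - N" for t
    using jump_entries(1)[where A="Ym (cis t)" and \<phi>="\<lambda>z. g_fun z + lam" and t=t and m=m] jN[OF that] by (simp add: yp_def ym_def)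
  have eq1: "(if n \<ge> 0 then h (nat n) else 0) = ex 1 1 1 (n - int m) + ex 1 2 1 n" for n :: int
  proof -
    define E where "E r = 2 * pi * ((if n \<ge> 0 then h (nat n) else 0) * of_real r ^ nat n
        - ex 1 1 (2 - r) (n - int m) - ex 1 2 (2 - r) n)" for r :: real
    have lim: "(E \<longlongrightarrow> 2 * pi * ((if n \<ge> 0 then h (nat n) else 0) * 1 - ex 1 1 1 (n - int m) - ex 1 2 1 n)) (at_left 1)"
    proof -
      have t21: "((\<lambda>r::real. 2 - r) \<longlongrightarrow> 1) (at_left 1)"
        using tendsto_diff[OF tendsto_const[of "2::real"] tendsto_ident_at[of "1::real" "{..<1}"]] by simp
      show ?thesis unfolding E_def ex_def by (intro tendsto_intros lim_pow_left t21) auto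
    qed
    have "\<forall>\<^sub>F r in at_left 1. norm (E r) \<le> K * (3 * integral S (Dp r) + (1 - r ^ m) * integral S Wp + 2 * integral S (Dm (2 - r)))"
      using evB
    proof eventually_elim
      case (elim r)
      define s where "s = 2 - r"
      have r: "0 \<le> r" "r < 1" and s: "s > 1" using elim by (auto simp: s_def)
      have "((\<lambda>t. (Hf (of_real r * cis t) - (cis (real m * t) * y 1 1 (of_real s * cis t) + y 1 2 (of_real s * cis t))) * cis (- (of_int n * t)))
          has_integral E r) S"
      proof -
        have "((\<lambda>t. Hf (of_real r * cis t) * cis (- (of_int n * t)) - (y 1 1 (of_real s * cis t) * cis (- (of_int (n - int m) * t)) + y 1 2 (of_real s * cis t) * cis (- (of_int n * t))))
          has_integral (2 * pi * (if n \<ge> 0 then h (nat n) * of_real r ^ nat n else 0) - (2 * pi * ex 1 1 s (n - int m) + 2 * pi * ex 1 2 s n))) S"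
          by (intro has_integral_diff has_integral_add IH IE r s)
        then show ?thesis
        proof (rule has_integral_eqI)
          fix t
          have "cis (real m * t) * cis (- (of_int n * t)) = cis (- (of_int (n - int m) * t))"
            by (simp add: cis_mult algebra_simps)
          then show "Hf (of_real r * cis t) * cis (- (of_int n * t)) - (y 1 1 (of_real s * cis t) * cis (- (of_int (n - int m) * t)) + y 1 2 (of_real s * cis t) * cis (- (of_int n * t)))
            = (Hf (of_real r * cis t) - (cis (real m * t) * y 1 1 (of_real s * cis t) + y 1 2 (of_real s * cis t))) * cis (- (of_int n * t))"
            by (simp add: algebra_simps)
        qed (simp add: E_def s_def algebra_simps)
      qed
      then have "norm (E r) \<le> integral S (\<lambda>t. K * Bd r t)"
      proof (rule ae_bound[OF _ _ N])
        show "(\<lambda>t. K * Bd r t) integrable_on S"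
          using has_integral_mult_right[OF conjunct2[OF elim], of K] by (rule has_integral_integrable)
        fix t assume t: "t \<in> S - N"
        have "cmod ((Hf (of_real r * cis t) - (cis (real m * t) * y 1 1 (of_real s * cis t) + y 1 2 (of_real s * cis t))) * cis (- (of_int n * t)))
           = cmod ((Hf (of_real r * cis t) - (cis (real m * t) * yp 1 1 t + yp 1 2 t))
               - ((cis (real m * t) * y 1 1 (of_real s * cis t) + y 1 2 (of_real s * cis t)) - (cis (real m * t) * ym 1 1 t + ym 1 2 t)))"
          unfolding norm_mult norm_cis mult_1_right by (rule arg_cong[where f=cmod, OF aux_sub3[OF HpHm[OF t]]])
        also have "\<dots> \<le> Bp r t + 2 * Dm s t"
          by (rule order.trans[OF norm_triangle_ineq4 add_mono[OF HpB HmB]]) (use r in auto)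
        also have "\<dots> \<le> K * Bd r t"
        proof -
          have "Bd r t \<ge> 0" using r by (simp add: Bd_def Bp_def Dp0 Dm0 Wp_def power_le_one)
          then show ?thesis using K by (simp add: Bd_def s_def mult_le_cancel_right1 order.trans[OF _ mult_right_mono[OF K]])
        qed
        finally show "norm ((Hf (of_real r * cis t) - (cis (real m * t) * y 1 1 (of_real s * cis t) + y 1 2 (of_real s * cis t))) * cis (- (of_int n * t))) \<le> K * Bd r t" .
      qed
      also have "\<dots> = K * (3 * integral S (Dp r) + (1 - r ^ m) * integral S Wp + 2 * integral S (Dm (2 - r)))"
        using has_integral_mult_right[OF conjunct2[OF elim], of K] by (rule integral_unique)
      finally show ?case .
    qed
    from limit_zero[OF lim this Blim] have "(if 0 \<le> n then h (nat n) else 0) - ex 1 1 1 (n - int m) - ex 1 2 1 n = 0"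
      by simp
    then show ?thesis by (simp add: algebra_simps)
  qed
  have hbig: "h n = 0" if "n > m" for n
    using eq1[of "int n"] that by (simp add: ex_def)
  have hm: "h m = 1"
    using eq1[of "int m"] by (simp add: ex_def)
  have hlow: "h n = entry (M (m - n)) 1 1" if "n < m" for n
    using eq1[of "int n"] that by (simp add: ex_def nat_diff_distrib)
  have Hpoly: "Hf w = (\<Sum>n\<le>m. h n * w ^ n)" if "norm w < 1" for w
  proof -
    have "(\<lambda>n. h n * w ^ n) sums (\<Sum>n\<in>{..m}. h n * w ^ n)"
      by (rule sums_finite) (auto simp: hbig)
    with Hser[OF that] show ?thesis by (simp add: sums_unique2)
  qed
  define X where "X j = g_coeff j + (if j = 0 then lam - 1 else 0)" for j :: int
  have gle: "cmod (g_fun z + lam - 1) \<le> 2 + cmod lam" for z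
  proof -
    have "cmod (g_fun z + lam - 1) \<le> cmod (g_fun z) + cmod lam + cmod (1::complex)"
      by (rule order.trans[OF norm_triangle_ineq4 add_right_mono[OF norm_triangle_ineq]])
    moreover have "cmod (g_fun z) \<le> 1" by (simp add: g_fun_def)
    ultimately show ?thesis by simp
  qed
  have pjump: "yp 1 1 t - ym 1 1 t = (g_fun (cis t) + lam - 1) * cis (- (real m * t)) * (cis (real m * t) * yp 1 1 t + yp 1 2 t)"
    if "t \<in> S - N" for t
    using jump_entries(2)[where A="Ym (cis t)" and \<phi>="\<lambda>z. g_fun z + lam" and t=t and m=m] jN[OF that] HpHm[OF that]
    by (simp add: yp_def ym_def)
  have eq2: "entry (M k) 1 1 + (\<Sum>n\<le>m. h n * X (int m - int n - int k)) = 0" if k: "k \<ge> 1" for k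
  proof -
    define E where "E r = 2 * pi * (0 - ex 1 1 (2 - r) (- int k) - (\<Sum>n\<le>m. h n * of_real r ^ n * X (int m - int n - int k)))" for r :: real
    have lim: "(E \<longlongrightarrow> 2 * pi * (0 - ex 1 1 1 (- int k) - (\<Sum>n\<le>m. h n * 1 * X (int m - int n - int k)))) (at_left 1)"
    proof -
      have t21: "((\<lambda>r::real. 2 - r) \<longlongrightarrow> 1) (at_left 1)"
        using tendsto_diff[OF tendsto_const[of "2::real"] tendsto_ident_at[of "1::real" "{..<1}"]] by simp
      show ?thesis unfolding E_def ex_def by (intro tendsto_intros lim_pow_left t21) auto
    qed
    have "\<forall>\<^sub>F r in at_left 1. norm (E r) \<le> K * (3 * integral S (Dp r) + (1 - r ^ m) * integral S Wp + 2 * integral S (Dm (2 - r)))"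
      using evB
    proof eventually_elim
      case (elim r)
      define s where "s = 2 - r"
      have r: "0 \<le> r" "r < 1" and s: "s > 1" using elim by (auto simp: s_def)
      define w where "w t = (y 1 1 (of_real r * cis t) - y 1 1 (of_real s * cis t)
          - (g_fun (cis t) + lam - 1) * cis (- (real m * t)) * Hf (of_real r * cis t)) * cis (- (of_int (- int k) * t))" for t
      have "(w has_integral E r) S"
      proof -
        have T3: "((\<lambda>t. \<Sum>n\<le>m. h n * of_real r ^ n * ((g_fun (cis t) + lam) * cis (- (of_int (int m - int n - int k) * t))
              - cis (of_int (- (int m - int n - int k)) * t)))
            has_integral (\<Sum>n\<le>m. h n * of_real r ^ n * (2 * pi * X (int m - int n - int k)))) S"
        proof (intro has_integral_sum finite_atMost)
          fix n
          have "((\<lambda>t. h n * of_real r ^ n * ((g_fun (cis t) + lam) * cis (- (of_int (int m - int n - int k) * t))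
              - cis (of_int (- (int m - int n - int k)) * t))) has_integral
              h n * of_real r ^ n * (2 * pi * (g_coeff (int m - int n - int k) + (if int m - int n - int k = 0 then lam else 0))
                - (if - (int m - int n - int k) = 0 then 2 * pi else 0))) {0..2*pi}"
            by (intro has_integral_mult_right has_integral_diff phi_has_integral cis_int_has_integral)
          then show "((\<lambda>t. h n * of_real r ^ n * ((g_fun (cis t) + lam) * cis (- (of_int (int m - int n - int k) * t))
              - cis (of_int (- (int m - int n - int k)) * t))) has_integral h n * of_real r ^ n * (2 * pi * X (int m - int n - int k))) S"
            unfolding S_def by (rule has_integral_eqI) (auto simp: X_def algebra_simps)
        qed
        have "((\<lambda>t. y 1 1 (of_real r * cis t) * cis (- (of_int (- int k) * t)) - y 1 1 (of_real s * cis t) * cis (- (of_int (- int k) * t))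
            - (\<Sum>n\<le>m. h n * of_real r ^ n * ((g_fun (cis t) + lam) * cis (- (of_int (int m - int n - int k) * t))
              - cis (of_int (- (int m - int n - int k)) * t))))
          has_integral (2 * pi * (if - int k \<ge> 0 then c11 (nat (- int k)) * of_real r ^ nat (- int k) else 0) - 2 * pi * ex 1 1 s (- int k)
            - (\<Sum>n\<le>m. h n * of_real r ^ n * (2 * pi * X (int m - int n - int k))))) S"
          by (intro has_integral_diff IY IE T3 r s)
        then show ?thesis
        proof (rule has_integral_eqI)
          fix t
          have Hr: "Hf (of_real r * cis t) = (\<Sum>n\<le>m. h n * of_real r ^ n * cis (real n * t))"
            using r by (subst Hpoly) (auto simp: norm_mult power_mult_distrib Complex.DeMoivre mult.assoc)
          have "(g_fun (cis t) + lam - 1) * cis (- (real m * t)) * Hf (of_real r * cis t) * cis (- (of_int (- int k) * t))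
              = (\<Sum>n\<le>m. h n * of_real r ^ n * ((g_fun (cis t) + lam) * cis (- (of_int (int m - int n - int k) * t))
                - cis (of_int (- (int m - int n - int k)) * t)))"
            unfolding Hr sum_distrib_left sum_distrib_right
          proof (intro sum.cong refl)
            fix n
            have c: "cis (- (real m * t)) * cis (real n * t) * cis (- (of_int (- int k) * t)) = cis (- (of_int (int m - int n - int k) * t))"
              by (simp add: cis_mult algebra_simps)
            have c2: "cis (of_int (- (int m - int n - int k)) * t) = cis (- (of_int (int m - int n - int k) * t))"
              by (rule arg_cong[where f=cis]) (simp add: algebra_simps)
            show "(g_fun (cis t) + lam - 1) * cis (- (real m * t)) * (h n * of_real r ^ n * cis (real n * t)) * cis (- (of_int (- int k) * t))
              = h n * of_real r ^ n * ((g_fun (cis t) + lam) * cis (- (of_int (int m - int n - int k) * t)) - cis (of_int (- (int m - int n - int k)) * t))"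
              unfolding c2 c[symmetric] by (simp add: algebra_simps)
          qed
          then show "y 1 1 (of_real r * cis t) * cis (- (of_int (- int k) * t)) - y 1 1 (of_real s * cis t) * cis (- (of_int (- int k) * t))
            - (\<Sum>n\<le>m. h n * of_real r ^ n * ((g_fun (cis t) + lam) * cis (- (of_int (int m - int n - int k) * t))
              - cis (of_int (- (int m - int n - int k)) * t))) = w t"
            unfolding w_def by (simp add: algebra_simps)
        qed (use k in \<open>simp add: E_def s_def algebra_simps sum_distrib_left\<close>)
      qed
      then have "norm (E r) \<le> integral S (\<lambda>t. K * Bd r t)"
      proof (rule ae_bound[OF _ _ N])
        show "(\<lambda>t. K * Bd r t) integrable_on S"
          using has_integral_mult_right[OF conjunct2[OF elim], of K] by (rule has_integral_integrable)
        fix t assume t: "t \<in> S - N"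
        have "cmod (w t) = cmod (y 1 1 (of_real r * cis t) - y 1 1 (of_real s * cis t)
          - (g_fun (cis t) + lam - 1) * cis (- (real m * t)) * Hf (of_real r * cis t))"
          unfolding w_def norm_mult norm_cis by simp
        also have "\<dots> \<le> Dp r t + Dm s t + (2 + cmod lam) * Bp r t"
          by (rule bound_eq2[OF ypD ymD HpB gle _ pjump[OF t]]) (use r in auto)
        also have "\<dots> \<le> K * Bd r t"
        proof -
          have "Dp r t \<le> Bp r t" using r Dp0[of r t] by (simp add: Bp_def Wp_def Dp0 power_le_one)
          moreover have "Dm s t \<ge> 0" by (rule Dm0)
          moreover have "cmod lam * (2 * Dm s t) \<ge> 0" using Dm0[of s t] by simp
          ultimately show ?thesis unfolding K_def Bd_def s_def
            by (simp add: algebra_simps) (use mult_nonneg_nonneg[OF norm_ge_zero[of lam] Dm0[of "2 - r" t]] in linarith)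
        qed
        finally show "cmod (w t) \<le> K * Bd r t" .
      qed
      also have "\<dots> = K * (3 * integral S (Dp r) + (1 - r ^ m) * integral S Wp + 2 * integral S (Dm (2 - r)))"
        using has_integral_mult_right[OF conjunct2[OF elim], of K] by (rule integral_unique)
      finally show ?case .
    qed
    from limit_zero[OF lim this Blim] have "0 - ex 1 1 1 (- int k) - (\<Sum>n\<le>m. h n * 1 * X (int m - int n - int k)) = 0"
      by simp
    then have "- entry (M k) 1 1 = (\<Sum>n\<le>m. h n * X (int m - int n - int k))" using k by (simp add: ex_def)
    then show ?thesis by (metis add.commute add.right_inverse minus_unique)
  qed
  show ?thesis
  proof (rule final_linalg[OF lam])
    fix i assume i: "i < m"
    define a where "a l = entry (M l) 1 1" for l
    have e2: "a (m - i) + (\<Sum>n\<le>m. h n * X (int i - int n)) = 0"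
    proof -
      have "int m - int n - int (m - i) = int i - int n" for n using i by simp
      then show ?thesis using eq2[of "m - i"] i by (simp add: a_def)
    qed
    have s1: "(\<Sum>n\<le>m. h n * X (int i - int n)) = (\<Sum>n<m. a (m - n) * X (int i - int n)) + g_coeff (int i - int m)"
    proof -
      have "(\<Sum>n\<le>m. h n * X (int i - int n)) = (\<Sum>n<m. h n * X (int i - int n)) + h m * X (int i - int m)"
        by (simp add: lessThan_Suc_atMost[symmetric])
      also have "(\<Sum>n<m. h n * X (int i - int n)) = (\<Sum>n<m. a (m - n) * X (int i - int n))"
        by (intro sum.cong refl) (simp add: hlow a_def)
      also have "h m * X (int i - int m) = g_coeff (int i - int m)"
        using i by (simp add: hm X_def)
      finally show ?thesis .
    qed
    have s2: "(\<Sum>n<m. fourier_coeff (\<lambda>z. g_fun z + lam) (int i - int n) * a (m - n))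
        = (\<Sum>n<m. a (m - n) * X (int i - int n)) + a (m - i)"
    proof -
      have "(\<Sum>n<m. fourier_coeff (\<lambda>z. g_fun z + lam) (int i - int n) * a (m - n))
          = (\<Sum>n<m. a (m - n) * X (int i - int n) + (if i = n then a (m - n) else 0))"
        unfolding fourier_coeff_phi by (intro sum.cong refl) (auto simp: X_def algebra_simps)
      also have "\<dots> = (\<Sum>n<m. a (m - n) * X (int i - int n)) + a (m - i)"
        using i by (simp add: sum.distrib)
      finally show ?thesis .
    qed
    show "(\<Sum>n<m. fourier_coeff (\<lambda>z. g_fun z + lam) (int i - int n) * entry (M (m - n)) 1 1) = - g_coeff (int i - int m)"
      using s2 s1 e2 unfolding a_def by (simp add: algebra_simps eq_neg_iff_add_eq_0)
  qed
qed

end
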